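(* If $G$ is a $2$-free circular interval digraph on $n$ vertices, then $\tilde{P}_3(G) \leq n^3/16$.
   Context: Digraphs are finite, loopless, with at most one edge $uv$ per ordered pair of distinct vertices. A digraph is $2$-free if there are no distinct $u,v$ with both $uv$ and $vu$ edges. A digraph $G$ is a circular interval digraph if its vertices can be arranged in a circle such that for every triple $u,v,w$ of distinct vertices in clockwise order, if $uw \in E(G)$ then $uv, vw \in E(G)$. An induced $3$-vertex directed path is a triple $(a,b,c)$ of distinct vertices with $ab,bc$ edges and neither $ac$ nor $ca$ an edge; $\tilde{P}_3(G)$ is the number of these. *)

theory Defs
  imports Complex_Main
begin

definition digraph :: "'a set \<Rightarrow> ('a \<Rightarrow> 'a \<Rightarrow> bool) \<Rightarrow> bool" where
  "digraph V E \<longleftrightarrow> finite V \<and> (\<forall>u v. E u v \<longrightarrow> u \<in> V \<and> v \<in> V \<and> u \<noteq> v)"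

definition two_free :: "'a set \<Rightarrow> ('a \<Rightarrow> 'a \<Rightarrow> bool) \<Rightarrow> bool" where
  "two_free V E \<longleftrightarrow> (\<forall>u\<in>V. \<forall>v\<in>V. u \<noteq> v \<longrightarrow> \<not> (E u v \<and> E v u))"

definition cyclic_order :: "nat \<Rightarrow> nat \<Rightarrow> nat \<Rightarrow> bool" where
  "cyclic_order i j k \<longleftrightarrow> (i < j \<and> j < k) \<or> (j < k \<and> k < i) \<or> (k < i \<and> i < j)"

text \<open>An arrangement of the vertices on a circle is a bijection pos : V -> {0..<card V};
  clockwise order follows increasing positions (cyclically).\<close>
definition circular_interval_digraph :: "'a set \<Rightarrow> ('a \<Rightarrow> 'a \<Rightarrow> bool) \<Rightarrow> bool" where
  "circular_interval_digraph V E \<longleftrightarrow> digraph V E \<and>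
     (\<exists>pos. bij_betw pos V {0..<card V} \<and>
        (\<forall>u\<in>V. \<forall>v\<in>V. \<forall>w\<in>V. u \<noteq> v \<and> v \<noteq> w \<and> u \<noteq> w \<and>
            cyclic_order (pos u) (pos v) (pos w) \<and> E u w \<longrightarrow> E u v \<and> E v w))"

definition induced_P3 :: "'a set \<Rightarrow> ('a \<Rightarrow> 'a \<Rightarrow> bool) \<Rightarrow> ('a \<times> 'a \<times> 'a) set" where
  "induced_P3 V E = {(a, b, c). a \<in> V \<and> b \<in> V \<and> c \<in> V \<and> a \<noteq> b \<and> b \<noteq> c \<and> a \<noteq> c \<and>
       E a b \<and> E b c \<and> \<not> E a c \<and> \<not> E c a}"

definition P3_count :: "'a set \<Rightarrow> ('a \<Rightarrow> 'a \<Rightarrow> bool) \<Rightarrow> nat" where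
  "P3_count V E = card (induced_P3 V E)"

end

theory Submission
  imports Defs
begin

definition Kset :: "int \<Rightarrow> int \<Rightarrow> (nat \<times> nat) set" where
  "Kset a b = {(u,w). 2 * int u + int w \<le> a \<and> int u + 2 * int w \<le> b}"

definition K :: "int \<Rightarrow> int \<Rightarrow> nat" where "K a b = card (Kset a b)"

definition hh :: "int \<Rightarrow> int \<Rightarrow> int" where
  "hh a b = (if a < 0 \<or> b < 0 then 0 else min a (b div 2) + 1 + min (a div 2) b)"

lemma Kset_sub: "Kset a b \<subseteq> {0..nat a} \<times> {0..nat b}"
  unfolding Kset_def by auto

lemma Kset_finite: "finite (Kset a b)"
  using Kset_sub finite_subset by blast

lemma K_neg: "a < 0 \<or> b < 0 \<Longrightarrow> K a b = 0"
  unfolding K_def Kset_def by (auto intro!: card_eq_0_iff[THEN iffD2])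

lemma K_rec_pos:
  assumes "0 \<le> a" "0 \<le> b"
  shows "int (K a b) = hh a b + int (K (a-3) (b-3))"
proof -
  define m1 where "m1 = nat (min a (b div 2))"
  define m2 where "m2 = nat (min (a div 2) b)"
  define B1 where "B1 = (\<lambda>w. (0::nat, w)) ` {0..m1}"
  define B2 where "B2 = (\<lambda>u. (u, 0::nat)) ` {1..m2}"
  define C where "C = (\<lambda>(u,w). (Suc u, Suc w)) ` Kset (a-3) (b-3)"
  have eq: "Kset a b = B1 \<union> B2 \<union> C"
  proof (intro set_eqI iffI)
    fix x assume x: "x \<in> Kset a b"
    obtain u w where xu: "x = (u,w)" by (cases x)
    show "x \<in> B1 \<union> B2 \<union> C"
    proof (cases "u = 0")
      case True
      then have "w \<le> m1" using x assms unfolding xu Kset_def m1_def by auto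
      then show ?thesis unfolding B1_def xu True by auto
    next
      case False
      show ?thesis
      proof (cases "w = 0")
        case True
        then have "u \<le> m2" using x assms unfolding xu Kset_def m2_def by auto
        then show ?thesis using False unfolding B2_def xu True by auto
      next
        case False2: False
        then obtain u' w' where "u = Suc u'" "w = Suc w'" using False
          by (metis not0_implies_Suc)
        moreover have "(u',w') \<in> Kset (a-3) (b-3)" using x unfolding xu Kset_def
          using calculation by auto
        ultimately show ?thesis unfolding C_def xu by force
      qed
    qed
  next
    fix x assume "x \<in> B1 \<union> B2 \<union> C"
    then show "x \<in> Kset a b"
      unfolding B1_def B2_def C_def Kset_def m1_def m2_def using assms by auto
  qed
  have d1: "B1 \<inter> B2 = {}" unfolding B1_def B2_def by auto
  have d2: "(B1 \<union> B2) \<inter> C = {}" unfolding B1_def B2_def C_def by auto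
  have fC: "finite C" unfolding C_def using Kset_finite by auto
  have cB1: "card B1 = Suc m1" unfolding B1_def by (subst card_image) (auto simp: inj_on_def)
  have cB2: "card B2 = m2" unfolding B2_def by (subst card_image) (auto simp: inj_on_def)
  have cC: "card C = K (a-3) (b-3)" unfolding C_def K_def
    by (subst card_image) (auto simp: inj_on_def)
  have fB1: "finite B1" and fB2: "finite B2" unfolding B1_def B2_def by auto
  have "K a b = card (B1 \<union> B2) + card C"
    unfolding K_def eq using fB1 fB2 fC d2 by (simp add: card_Un_disjoint)
  also have "card (B1 \<union> B2) = card B1 + card B2" using fB1 fB2 d1 by (simp add: card_Un_disjoint)
  finally have "K a b = card B1 + card B2 + card C" .
  then show ?thesis using cB1 cB2 cC assms unfolding hh_def m1_def m2_def by auto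
qed

lemma K_rec: "int (K a b) = hh a b + int (K (a-3) (b-3))"
proof (cases "a < 0 \<or> b < 0")
  case True
  then show ?thesis using K_neg[of a b] K_neg[of "a-3" "b-3"] unfolding hh_def by auto
next
  case False
  then show ?thesis using K_rec_pos by auto
qed

definition FF :: "int \<Rightarrow> int \<Rightarrow> int" where
  "FF a b = 2 * int (K a b) + int (K (a-1) b) + int (K a (b-1)) + 2 * int (K (a-1) (b-1))"

definition BB :: "int \<Rightarrow> int \<Rightarrow> int" where
  "BB a b = 2 * hh a b + hh (a-1) b + hh a (b-1) + 2 * hh (a-1) (b-1)"

lemma FF_rec: "FF a b = BB a b + FF (a-3) (b-3)"
  unfolding FF_def BB_def
  using K_rec[of a b] K_rec[of "a-1" b] K_rec[of a "b-1"] K_rec[of "a-1" "b-1"]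
  by (simp add: algebra_simps)

lemma div2_facts: "(2*x - 1) div 2 = x - (1::int)" "(2*x + 1) div 2 = x" "(2*x) div 2 = x"
  "(2*x + 1 - 1) div 2 = x" "(2*x - 1 - 1) div 2 = x - 1"
  by presburger+

lemma BB_big: assumes "3 \<le> a" "3 \<le> b" shows "BB a b \<le> 3 * (a + b)"
proof -
  obtain x where x: "a = 2*x \<or> a = 2*x+1" by (metis odd_two_times_div_two_succ even_two_times_div_two)
  obtain y where y: "b = 2*y \<or> b = 2*y+1" by (metis odd_two_times_div_two_succ even_two_times_div_two)
  show ?thesis using x y assms unfolding BB_def hh_def
    by (elim disjE) (simp_all add: min_def div2_facts split: if_splits)
qed

lemma BB_le18: assumes "0 \<le> a" "a \<le> 2" "0 \<le> b" shows "BB a b \<le> 18"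
proof -
  have "a = 0 \<or> a = 1 \<or> a = 2" using assms by arith
  moreover obtain y where y: "b = 2*y \<or> b = 2*y+1" by (metis odd_two_times_div_two_succ even_two_times_div_two)
  ultimately show ?thesis using assms unfolding BB_def hh_def
    by (elim disjE) (simp_all add: min_def div2_facts split: if_splits)
qed

lemma BB_sym: "BB a b = BB b a"
  unfolding BB_def hh_def by (auto simp: min.commute)

lemma BB_small_aux: assumes "0 \<le> a" "a \<le> 2" "0 \<le> b" shows "4 * BB a b \<le> (a+b+3)^2"
proof (cases "a + b \<le> 5")
  case True
  then have "b \<in> {0..5}" using assms by auto
  then have "b = 0 \<or> b = 1 \<or> b = 2 \<or> b = 3 \<or> b = 4 \<or> b = 5" by auto
  moreover have "a = 0 \<or> a = 1 \<or> a = 2" using assms by arith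
  ultimately show ?thesis unfolding BB_def hh_def by (elim disjE) simp_all
next
  case False
  then have "(9::int)^2 \<le> (a+b+3)^2" by (intro power_mono) auto
  then show ?thesis using BB_le18[OF assms] by simp
qed

lemma BB_small: assumes "0 \<le> a" "0 \<le> b" "min a b \<le> 2" shows "4 * BB a b \<le> (a+b+3)^2"
proof (cases "a \<le> 2")
  case True then show ?thesis using BB_small_aux assms by auto
next
  case False
  then have "b \<le> 2" using assms by auto
  then show ?thesis using BB_small_aux[of b a] assms BB_sym[of a b] by (simp add: add.commute)
qed

lemma FF_zero: "a < 0 \<or> b < 0 \<Longrightarrow> FF a b = 0"
  unfolding FF_def using K_neg by auto

lemma FF_bound: "4 * FF a b \<le> (a + b + 3)^2"
proof (induction "nat (a + b + 6)" arbitrary: a b rule: less_induct)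
  case less
  show ?case
  proof (cases "a < 0 \<or> b < 0")
    case True then show ?thesis using FF_zero by simp
  next
    case False
    show ?thesis
    proof (cases "min a b \<le> 2")
      case True
      have "FF (a-3) (b-3) = 0" using True by (intro FF_zero) auto
      then show ?thesis using FF_rec[of a b] BB_small[of a b] False True by simp
    next
      case False2: False
      have IH: "4 * FF (a-3) (b-3) \<le> ((a-3) + (b-3) + 3)^2"
        using less(1)[of "a-3" "b-3"] False2 by auto
      have "BB a b \<le> 3 * (a+b)" using BB_big False2 by auto
      then have "4 * FF a b \<le> 12*(a+b) + (a+b-3)^2" using FF_rec[of a b] IH by (simp add: algebra_simps)
      also have "\<dots> = (a+b+3)^2" by (simp add: power2_eq_square algebra_simps)
      finally show ?thesis .
    qed
  qed
qed

lemma cyc_rot: "cyclic_order i j k \<Longrightarrow> cyclic_order j k i"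
  unfolding cyclic_order_def by auto

lemma cyc_cases: "i \<noteq> j \<Longrightarrow> j \<noteq> k \<Longrightarrow> i \<noteq> k \<Longrightarrow> cyclic_order i j k \<or> cyclic_order i k j"
  unfolding cyclic_order_def by arith

locale cig =
  fixes V :: "'a set" and E :: "'a \<Rightarrow> 'a \<Rightarrow> bool" and pos :: "'a \<Rightarrow> nat"
  assumes finV: "finite V"
    and Ein: "\<And>u v. E u v \<Longrightarrow> u \<in> V \<and> v \<in> V \<and> u \<noteq> v"
    and bij: "bij_betw pos V {0..<card V}"
    and circ: "\<And>u v w. u \<in> V \<Longrightarrow> v \<in> V \<Longrightarrow> w \<in> V \<Longrightarrow> u \<noteq> v \<Longrightarrow> v \<noteq> w \<Longrightarrow> u \<noteq> w
       \<Longrightarrow> cyclic_order (pos u) (pos v) (pos w) \<Longrightarrow> E u w \<Longrightarrow> E u v \<and> E v w"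
    and tf: "\<And>u v. E u v \<Longrightarrow> \<not> E v u"
begin

abbreviation n where "n \<equiv> card V"

definition adj where "adj u w \<longleftrightarrow> E u w \<or> E w u"

lemma pos_lt: "u \<in> V \<Longrightarrow> pos u < n"
  using bij unfolding bij_betw_def by auto

lemma pos_inj: "u \<in> V \<Longrightarrow> w \<in> V \<Longrightarrow> pos u = pos w \<Longrightarrow> u = w"
  using bij unfolding bij_betw_def inj_on_def by auto

lemma pos_neq: "u \<in> V \<Longrightarrow> w \<in> V \<Longrightarrow> u \<noteq> w \<Longrightarrow> pos u \<noteq> pos w"
  using pos_inj by blast

lemma nostar_in: assumes "E a b" "E c b" "a \<noteq> c" shows "adj a c"
proof -
  have V: "a \<in> V" "b \<in> V" "c \<in> V" and ne: "a \<noteq> b" "c \<noteq> b" using Ein assms(1,2) by auto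
  have pn: "pos a \<noteq> pos c" "pos c \<noteq> pos b" "pos a \<noteq> pos b" using pos_neq V ne assms(3) by auto
  show ?thesis
  proof (cases "cyclic_order (pos a) (pos c) (pos b)")
    case True
    have "E a c \<and> E c b" by (rule circ[OF V(1) V(3) V(2) assms(3) ne(2) ne(1) True assms(1)])
    then show ?thesis unfolding adj_def by blast
  next
    case False
    then have "cyclic_order (pos a) (pos b) (pos c)" using cyc_cases pn by blast
    then have cy: "cyclic_order (pos c) (pos a) (pos b)" using cyc_rot by blast
    have "E c a \<and> E a b" by (rule circ[OF V(3) V(1) V(2) assms(3)[symmetric] ne(1) ne(2) cy assms(2)])
    then show ?thesis unfolding adj_def by blast
  qed
qed

lemma nostar_out: assumes "E b a" "E b c" "a \<noteq> c" shows "adj a c"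
proof -
  have V: "a \<in> V" "b \<in> V" "c \<in> V" and ne: "b \<noteq> a" "b \<noteq> c" using Ein assms(1,2) by auto
  have pn: "pos a \<noteq> pos c" "pos b \<noteq> pos c" "pos b \<noteq> pos a" using pos_neq V ne assms(3) by auto
  show ?thesis
  proof (cases "cyclic_order (pos b) (pos a) (pos c)")
    case True
    have "E b a \<and> E a c" by (rule circ[OF V(2) V(1) V(3) ne(1) assms(3) ne(2) True assms(2)])
    then show ?thesis unfolding adj_def by blast
  next
    case False
    then have cy: "cyclic_order (pos b) (pos c) (pos a)" using cyc_cases pn by (metis)
    have "E b c \<and> E c a" by (rule circ[OF V(2) V(3) V(1) ne(2) assms(3)[symmetric] ne(1) cy assms(1)])
    then show ?thesis unfolding adj_def by blast
  qed
qed

definition nonnb where "nonnb u = {x \<in> V. x \<noteq> u \<and> \<not> adj u x}"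
definition r where "r u = card (nonnb u)"
definition common where "common a c = {b \<in> V. adj a b \<and> adj c b}"
definition NA where "NA = Sigma V nonnb"

lemma NA_iff: "(a,c) \<in> NA \<longleftrightarrow> a \<in> V \<and> c \<in> V \<and> a \<noteq> c \<and> \<not> adj a c"
  unfolding NA_def nonnb_def by auto

lemma finite_NA: "finite NA" unfolding NA_def nonnb_def using finV by auto

lemma fin_common: "finite (common a c)" unfolding common_def using finV by auto

definition TT where "TT = {(a,b,c). (a,c) \<in> NA \<and> b \<in> common a c}"

lemma card_TT: "card TT = (\<Sum>(a,c)\<in>NA. card (common a c))"
proof -
  have eqT: "TT = (\<lambda>((a,c),b). (a,b,c)) ` (Sigma NA (\<lambda>(a,c). common a c))"
  proof (intro set_eqI iffI)
    fix t assume "t \<in> TT"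
    then obtain a b c where tt: "t = (a,b,c)" "(a,c) \<in> NA" "b \<in> common a c"
      unfolding TT_def by auto
    then show "t \<in> (\<lambda>((a,c),b). (a,b,c)) ` (Sigma NA (\<lambda>(a,c). common a c))"
      by (intro image_eqI[of _ _ "((a,c),b)"]) auto
  next
    fix t assume "t \<in> (\<lambda>((a,c),b). (a,b,c)) ` (Sigma NA (\<lambda>(a,c). common a c))"
    then show "t \<in> TT" unfolding TT_def by auto
  qed
  have inj: "inj_on (\<lambda>((a,c),b). (a,b,c)) (Sigma NA (\<lambda>(a,c). common a c))"
    by (auto simp: inj_on_def)
  have "card TT = card (Sigma NA (\<lambda>(a,c). common a c))"
    unfolding eqT by (rule card_image[OF inj])
  also have "\<dots> = (\<Sum>x\<in>NA. card ((\<lambda>(a,c). common a c) x))"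
    using finite_NA fin_common by (intro card_SigmaI) (auto simp: split_def)
  also have "\<dots> = (\<Sum>(a,c)\<in>NA. card (common a c))"
    by (simp add: split_def)
  finally show ?thesis .
qed

lemma card_TT2: "card TT = 2 * P3_count V E"
proof -
  let ?P = "induced_P3 V E"
  let ?rv = "\<lambda>(a,b,c). (c,b,a)"
  have sub: "?P \<subseteq> V \<times> V \<times> V" unfolding induced_P3_def by auto
  have fP: "finite ?P" using finite_subset[OF sub] finV by auto
  have eq: "TT = ?P \<union> ?rv ` ?P"
  proof (intro set_eqI iffI)
    fix t assume t: "t \<in> TT"
    obtain a b c where tt: "t = (a,b,c)" by (cases t)
    have h: "(a,c) \<in> NA" "b \<in> V" "adj a b" "adj c b" using t unfolding tt TT_def common_def by auto
    have hh: "a \<in> V" "c \<in> V" "a \<noteq> c" "\<not> adj a c" using h NA_iff by auto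
    have "(E a b \<and> E b c) \<or> (E b a \<and> E c b)"
      using h(3,4) hh(3,4) nostar_in[of a b c] nostar_out[of b a c] unfolding adj_def by blast
    then show "t \<in> ?P \<union> ?rv ` ?P"
    proof
      assume "E a b \<and> E b c"
      then have "t \<in> ?P" using h hh Ein[of a b] Ein[of b c] unfolding tt induced_P3_def adj_def by auto
      then show ?thesis by (rule UnI1)
    next
      assume "E b a \<and> E c b"
      then have "(c,b,a) \<in> ?P" using h hh Ein[of b a] Ein[of c b] unfolding tt induced_P3_def adj_def by auto
      then have "?rv (c,b,a) \<in> ?rv ` ?P" by (rule imageI)
      then show ?thesis unfolding tt by simp
    qed
  next
    fix t assume "t \<in> ?P \<union> ?rv ` ?P"
    then have "\<exists>s \<in> ?P. t = s \<or> t = ?rv s" by blast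
    then obtain s where s: "s \<in> ?P" "t = s \<or> t = ?rv s" by blast
    obtain a b c where abc: "s = (a,b,c)" by (cases s)
    have "a \<in> V" "b \<in> V" "c \<in> V" "a \<noteq> c" "E a b" "E b c" "\<not> E a c" "\<not> E c a"
      using s abc unfolding induced_P3_def by auto
    then show "t \<in> TT" using s(2) unfolding abc TT_def NA_iff common_def adj_def by auto
  qed
  have disj: "?P \<inter> ?rv ` ?P = {}"
  proof (rule equals0I)
    fix t assume t: "t \<in> ?P \<inter> ?rv ` ?P"
    then obtain s where s: "s \<in> ?P" "t = ?rv s" by auto
    obtain a b c where "s = (a,b,c)" by (cases s)
    then have "E a b" "E b c" "(c,b,a) \<in> ?P" using s t unfolding induced_P3_def by auto
    then have "E b a" unfolding induced_P3_def by auto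
    then show False using tf \<open>E a b\<close> by blast
  qed
  have inj: "inj_on ?rv ?P" by (auto simp: inj_on_def)
  have "card TT = card ?P + card (?rv ` ?P)" unfolding eq using fP disj by (simp add: card_Un_disjoint)
  then show ?thesis unfolding P3_count_def using card_image[OF inj] by simp
qed

end

lemma downward_set:
  fixes S :: "nat set"
  assumes fin: "finite S" and pos: "\<And>k. k \<in> S \<Longrightarrow> 1 \<le> k"
    and down: "\<And>k j. k \<in> S \<Longrightarrow> 1 \<le> j \<Longrightarrow> j < k \<Longrightarrow> j \<in> S"
  shows "S = {1..card S}"
proof -
  have le: "k \<le> card S" if k: "k \<in> S" for k
  proof -
    have "{1..k} \<subseteq> S"
    proof
      fix j assume "j \<in> {1..k}"
      then have j: "1 \<le> j" "j \<le> k" by simp_all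
      show "j \<in> S"
      proof (cases "j = k")
        case True then show ?thesis using k by simp
      next
        case False then have "j < k" using j by simp
        then show ?thesis using down[OF k j(1)] by simp
      qed
    qed
    then have "card {1..k} \<le> card S" using fin by (rule card_mono[rotated])
    then show ?thesis by simp
  qed
  have ge: "j \<in> S" if j: "1 \<le> j" "j \<le> card S" for j
  proof (rule ccontr)
    assume nj: "j \<notin> S"
    have "S \<subseteq> {1..<j}"
    proof
      fix k assume k: "k \<in> S"
      have "k \<noteq> j" using nj k by blast
      moreover have "\<not> j < k" using down[OF k j(1)] nj by blast
      moreover have "1 \<le> k" by (rule pos[OF k])
      ultimately show "k \<in> {1..<j}" by simp
    qed
    then have "card S \<le> card {1..<j}" by (rule card_mono[rotated]) simp
    then show False using j by simp
  qed
  show ?thesis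
  proof (rule set_eqI)
    fix x show "x \<in> S \<longleftrightarrow> x \<in> {1..card S}"
    proof
      assume "x \<in> S" then show "x \<in> {1..card S}" using le[of x] pos[of x] by simp
    next
      assume "x \<in> {1..card S}" then show "x \<in> S" using ge[of x] by simp
    qed
  qed
qed

context cig begin

definition d :: "'a \<Rightarrow> 'a \<Rightarrow> nat" where "d u w = (pos w + n - pos u) mod n"

lemma d_eq: assumes "u \<in> V" "w \<in> V"
  shows "d u w = (if pos u \<le> pos w then pos w - pos u else pos w + n - pos u)"
proof -
  have "pos u < n" "pos w < n" using pos_lt assms by auto
  show ?thesis
  proof (cases "pos u \<le> pos w")
    case True
    then have "pos w + n - pos u = (pos w - pos u) + n" by simp
    moreover have "((pos w - pos u) + n) mod n = pos w - pos u" using \<open>pos w < n\<close> by simp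
    ultimately show ?thesis unfolding d_def using True by simp
  next
    case False
    then show ?thesis unfolding d_def using \<open>pos u < n\<close> by simp
  qed
qed

lemma n_pos: "u \<in> V \<Longrightarrow> 0 < n"
  using pos_lt by fastforce

lemma d_lt: assumes "u \<in> V" shows "d u w < n"
  unfolding d_def using n_pos[OF assms] by simp

lemma d_0: assumes "u \<in> V" "w \<in> V" shows "d u w = 0 \<longleftrightarrow> u = w"
proof -
  have "pos u < n" "pos w < n" using pos_lt assms by auto
  then have "d u w = 0 \<longleftrightarrow> pos u = pos w" unfolding d_eq[OF assms] by auto
  then show ?thesis using pos_inj[OF assms] by auto
qed

lemma d_pos: "u \<in> V \<Longrightarrow> w \<in> V \<Longrightarrow> u \<noteq> w \<Longrightarrow> 0 < d u w"
  using d_0 by blast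

lemma d_sum: assumes "u \<in> V" "w \<in> V" "u \<noteq> w" shows "d u w + d w u = n"
proof -
  have "pos u < n" "pos w < n" "pos u \<noteq> pos w" using pos_lt pos_neq assms by auto
  then show ?thesis unfolding d_eq[OF assms(1,2)] d_eq[OF assms(2,1)] by auto
qed

lemma cyc_d: assumes "u \<in> V" "v \<in> V" "w \<in> V" "u \<noteq> v" "v \<noteq> w" "u \<noteq> w"
  shows "cyclic_order (pos u) (pos v) (pos w) \<longleftrightarrow> d u v < d u w"
proof -
  have "pos u < n" "pos w < n" "pos v < n" "pos u \<noteq> pos w" "pos u \<noteq> pos v" "pos v \<noteq> pos w"
    using pos_lt pos_neq assms by auto
  then show ?thesis unfolding d_eq[OF assms(1,2)] d_eq[OF assms(1,3)] cyclic_order_def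
    by auto
qed

lemma d_tri: assumes "u \<in> V" "v \<in> V" "w \<in> V" "u \<noteq> v" "v \<noteq> w" "u \<noteq> w" "d u v < d u w"
  shows "d u v + d v w = d u w"
proof -
  have "pos u < n" "pos w < n" "pos v < n" "pos u \<noteq> pos w" "pos u \<noteq> pos v" "pos v \<noteq> pos w"
    using pos_lt pos_neq assms by auto
  then show ?thesis using assms(7) unfolding d_eq[OF assms(1,2)] d_eq[OF assms(1,3)] d_eq[OF assms(2,3)]
    by (auto split: if_splits)
qed

lemma d_inj1: assumes "u \<in> V" "w1 \<in> V" "w2 \<in> V" "d u w1 = d u w2" shows "w1 = w2"
proof -
  have "pos u < n" "pos w1 < n" "pos w2 < n" using pos_lt assms by auto
  then have "pos w1 = pos w2" using assms(4) unfolding d_eq[OF assms(1,2)] d_eq[OF assms(1,3)]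
    by (auto split: if_splits)
  then show ?thesis using pos_inj assms by auto
qed

lemma d_inj2: assumes "u \<in> V" "w1 \<in> V" "w2 \<in> V" "d w1 u = d w2 u" shows "w1 = w2"
proof -
  have "pos u < n" "pos w1 < n" "pos w2 < n" using pos_lt assms by auto
  then have "pos w1 = pos w2" using assms(4) unfolding d_eq[OF assms(2,1)] d_eq[OF assms(3,1)]
    by (auto split: if_splits)
  then show ?thesis using pos_inj assms by auto
qed

lemma d_surj: assumes "u \<in> V" "k < n" shows "\<exists>w\<in>V. d u w = k"
proof -
  define t where "t = (if pos u + k < n then pos u + k else pos u + k - n)"
  have pu: "pos u < n" using pos_lt assms by auto
  have tl: "t < n" unfolding t_def using pu assms by auto
  then have tin: "t \<in> {0..<card V}" by simp
  define w where "w = inv_into V pos t"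
  have wV: "w \<in> V" and pw: "pos w = t"
    using bij tin unfolding w_def bij_betw_def by (auto intro: inv_into_into f_inv_into_f)
  have "d u w = k" unfolding d_eq[OF assms(1) wV] pw t_def using pu assms by auto
  then show ?thesis using wV by blast
qed

definition outs where "outs u = {w \<in> V. E u w}"
definition ins where "ins u = {w \<in> V. E w u}"
definition q where "q u = card (outs u)"
definition p where "p u = card (ins u)"

lemma fin_outs: "finite (outs u)" unfolding outs_def using finV by simp
lemma fin_ins: "finite (ins u)" unfolding ins_def using finV by simp

lemma out_char: assumes uV: "u \<in> V" and wV: "w \<in> V"
  shows "E u w \<longleftrightarrow> 0 < d u w \<and> d u w \<le> q u"
proof -
  let ?D = "d u ` outs u"
  have inj: "inj_on (d u) (outs u)"
    unfolding inj_on_def outs_def using d_inj1[OF uV] by blast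
  have cD: "card ?D = q u" unfolding q_def using card_image[OF inj] .
  have fD: "finite ?D" using fin_outs by simp
  have posD: "1 \<le> k" if "k \<in> ?D" for k
  proof -
    obtain x where x: "x \<in> outs u" "k = d u x" using \<open>k \<in> ?D\<close> by blast
    have "x \<in> V" "E u x" using x unfolding outs_def by auto
    then have "u \<noteq> x" using Ein by blast
    then have "0 < d u x" using d_pos uV \<open>x \<in> V\<close> by blast
    then show ?thesis using x by simp
  qed
  have downD: "j \<in> ?D" if k: "k \<in> ?D" and j: "1 \<le> j" "j < k" for k j
  proof -
    obtain x where x: "x \<in> outs u" "k = d u x" using k by blast
    have xV: "x \<in> V" and Ex: "E u x" using x unfolding outs_def by auto
    have "j < n" using j x d_lt[OF uV, of x] by simp
    then obtain y where yV: "y \<in> V" and dy: "d u y = j" using d_surj[OF uV] by blast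
    have uy: "u \<noteq> y" using dy j d_0[OF uV yV] by auto
    have yx: "y \<noteq> x" using dy x j by auto
    have ux: "u \<noteq> x" using Ein Ex by blast
    have "cyclic_order (pos u) (pos y) (pos x)"
      using cyc_d[OF uV yV xV uy yx ux] dy x j by simp
    then have "E u y" using circ[OF uV yV xV uy yx ux _ Ex] by blast
    then have "y \<in> outs u" unfolding outs_def using yV by simp
    then show ?thesis using dy by blast
  qed
  have Deq: "?D = {1..q u}" using downward_set[OF fD posD downD] cD by simp
  have "E u w \<longleftrightarrow> w \<in> outs u" unfolding outs_def using wV by simp
  also have "\<dots> \<longleftrightarrow> d u w \<in> ?D"
  proof
    assume "d u w \<in> ?D"
    then obtain x where x: "x \<in> outs u" "d u w = d u x" by blast
    then have "x = w" using d_inj1[OF uV] wV unfolding outs_def by auto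
    then show "w \<in> outs u" using x by simp
  qed simp
  also have "\<dots> \<longleftrightarrow> 0 < d u w \<and> d u w \<le> q u" unfolding Deq by auto
  finally show ?thesis .
qed

lemma in_char: assumes uV: "u \<in> V" and wV: "w \<in> V"
  shows "E w u \<longleftrightarrow> 0 < d w u \<and> d w u \<le> p u"
proof -
  let ?f = "\<lambda>x. d x u"
  let ?D = "?f ` ins u"
  have inj: "inj_on ?f (ins u)"
    unfolding inj_on_def ins_def using d_inj2[OF uV] by blast
  have cD: "card ?D = p u" unfolding p_def using card_image[OF inj] .
  have fD: "finite ?D" using fin_ins by simp
  have posD: "1 \<le> k" if "k \<in> ?D" for k
  proof -
    obtain x where x: "x \<in> ins u" "k = d x u" using \<open>k \<in> ?D\<close> by blast
    have "x \<in> V" "E x u" using x unfolding ins_def by auto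
    then have "x \<noteq> u" using Ein by blast
    then have "0 < d x u" using d_pos uV \<open>x \<in> V\<close> by blast
    then show ?thesis using x by simp
  qed
  have downD: "j \<in> ?D" if k: "k \<in> ?D" and j: "1 \<le> j" "j < k" for k j
  proof -
    obtain x where x: "x \<in> ins u" "k = d x u" using k by blast
    have xV: "x \<in> V" and Ex: "E x u" using x unfolding ins_def by auto
    have ux: "u \<noteq> x" using Ein Ex by blast
    have kn: "k < n" using x d_lt[OF xV, of u] by simp
    have "n - j < n" using j kn by simp
    then obtain y where yV: "y \<in> V" and dy: "d u y = n - j" using d_surj[OF uV] by blast
    have uy: "u \<noteq> y" using dy j kn d_0[OF uV yV] by auto
    have dyu: "d y u = j" using d_sum[OF uV yV uy] dy j kn by simp
    have yx: "y \<noteq> x" using dyu x j by auto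
    have dxu: "d u x = n - k" using d_sum[OF uV xV ux] x by simp
    have "cyclic_order (pos u) (pos x) (pos y)"
      using cyc_d[OF uV xV yV ux yx[symmetric] uy] dy dxu j kn by simp
    then have "cyclic_order (pos x) (pos y) (pos u)" by (rule cyc_rot)
    then have "E y u" using circ[OF xV yV uV yx[symmetric] uy[symmetric] ux[symmetric] _ Ex] by blast
    then have "y \<in> ins u" unfolding ins_def using yV by simp
    then show ?thesis using dyu by blast
  qed
  have Deq: "?D = {1..p u}" using downward_set[OF fD posD downD] cD by simp
  have "E w u \<longleftrightarrow> w \<in> ins u" unfolding ins_def using wV by simp
  also have "\<dots> \<longleftrightarrow> d w u \<in> ?D"
  proof
    assume "d w u \<in> ?D"
    then obtain x where x: "x \<in> ins u" "d w u = d x u" by blast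
    then have "x = w" using d_inj2[OF uV] wV unfolding ins_def by auto
    then show "w \<in> ins u" using x by simp
  qed simp
  also have "\<dots> \<longleftrightarrow> 0 < d w u \<and> d w u \<le> p u" unfolding Deq by auto
  finally show ?thesis .
qed

lemma pqr: assumes uV: "u \<in> V" shows "p u + q u + r u + 1 = n"
proof -
  have eqV: "V = insert u (outs u \<union> ins u \<union> nonnb u)"
    unfolding outs_def ins_def nonnb_def adj_def using uV by auto
  have d1: "outs u \<inter> ins u = {}" unfolding outs_def ins_def using tf by auto
  have d2: "(outs u \<union> ins u) \<inter> nonnb u = {}" unfolding outs_def ins_def nonnb_def adj_def by auto
  have nu: "u \<notin> outs u \<union> ins u \<union> nonnb u" unfolding outs_def ins_def nonnb_def using Ein by auto
  have fN: "finite (nonnb u)" unfolding nonnb_def using finV by simp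
  have "card V = Suc (card (outs u \<union> ins u \<union> nonnb u))"
    using eqV nu fin_outs fin_ins fN by (metis card_insert_disjoint finite_Un)
  also have "card (outs u \<union> ins u \<union> nonnb u) = card (outs u \<union> ins u) + card (nonnb u)"
    using d2 fin_outs fin_ins fN by (simp add: card_Un_disjoint)
  also have "card (outs u \<union> ins u) = card (outs u) + card (ins u)"
    using d1 fin_outs fin_ins by (simp add: card_Un_disjoint)
  finally show ?thesis unfolding p_def q_def r_def by simp
qed

end

context cig begin

lemma fin_nonnb: "finite (nonnb u)" unfolding nonnb_def using finV by simp

lemma nadj_self: "\<not> adj a a" unfolding adj_def using Ein by blast

lemma W_id: assumes ac: "(a,c) \<in> NA"
  shows "card (common a c) + r a + r c = n + card (nonnb a \<inter> nonnb c)"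
proof -
  have aV: "a \<in> V" and cV: "c \<in> V" and ne: "a \<noteq> c" and na: "\<not> adj a c" using ac NA_iff by auto
  have na': "\<not> adj c a" using na unfolding adj_def by blast
  define Na where "Na = {x \<in> V. \<not> adj a x}"
  define Nc where "Nc = {x \<in> V. \<not> adj c x}"
  have fNa: "finite Na" and fNc: "finite Nc" unfolding Na_def Nc_def using finV by auto
  have Na_eq: "Na = insert a (nonnb a)" unfolding Na_def nonnb_def using aV nadj_self by auto
  have Nc_eq: "Nc = insert c (nonnb c)" unfolding Nc_def nonnb_def using cV nadj_self by auto
  have cNa: "card Na = r a + 1" unfolding Na_eq r_def using fin_nonnb by (simp add: nonnb_def)
  have cNc: "card Nc = r c + 1" unfolding Nc_eq r_def using fin_nonnb by (simp add: nonnb_def)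
  have Veq: "V = common a c \<union> (Na \<union> Nc)" unfolding common_def Na_def Nc_def by auto
  have dj: "common a c \<inter> (Na \<union> Nc) = {}" unfolding common_def Na_def Nc_def by auto
  have Int_eq: "Na \<inter> Nc = insert a (insert c (nonnb a \<inter> nonnb c))"
    unfolding Na_eq Nc_eq using ne na na' aV cV by (auto simp: nonnb_def adj_def)
  have cInt: "card (Na \<inter> Nc) = card (nonnb a \<inter> nonnb c) + 2"
    unfolding Int_eq using ne fin_nonnb by (simp add: nonnb_def)
  have "card V = card (common a c) + card (Na \<union> Nc)"
    using Veq dj fin_common fNa fNc by (metis card_Un_disjoint finite_Un)
  moreover have "card (Na \<union> Nc) + card (Na \<inter> Nc) = card Na + card Nc"
    using card_Un_Int[OF fNa fNc] by simp
  ultimately show ?thesis using cNa cNc cInt by simp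
qed

lemma sum_NA_fst: "(\<Sum>(a,c)\<in>NA. f a) = (\<Sum>a\<in>V. of_nat (r a) * f a)"
proof -
  have "(\<Sum>(a,c)\<in>NA. f a) = (\<Sum>a\<in>V. \<Sum>c\<in>nonnb a. f a)"
    unfolding NA_def using finV fin_nonnb by (subst sum.Sigma) auto
  also have "\<dots> = (\<Sum>a\<in>V. of_nat (r a) * f a)" unfolding r_def by simp
  finally show ?thesis .
qed

lemma NA_swap: "(\<Sum>(a,c)\<in>NA. f c) = (\<Sum>(a,c)\<in>NA. f a)"
proof -
  have sw: "(\<lambda>(a,c). (c,a)) ` NA = NA" unfolding NA_iff
    by (auto simp: image_iff NA_iff adj_def)
  have inj: "inj_on (\<lambda>(a,c). (c,a)) NA" by (auto simp: inj_on_def)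
  have "(\<Sum>(a,c)\<in>NA. f a) = (\<Sum>x\<in>(\<lambda>(a,c). (c,a)) ` NA. (\<lambda>(a,c). f a) x)" using sw by simp
  also have "\<dots> = (\<Sum>x\<in>NA. (\<lambda>(a,c). f a) ((\<lambda>(a,c). (c,a)) x))" using sum.reindex[OF inj] by simp
  also have "\<dots> = (\<Sum>(a,c)\<in>NA. f c)" by (simp add: split_def)
  finally show ?thesis by simp
qed

definition Ind where "Ind = Sigma NA (\<lambda>(a,c). nonnb a \<inter> nonnb c)"

lemma card_Ind: "card Ind = (\<Sum>(a,c)\<in>NA. card (nonnb a \<inter> nonnb c))"
proof -
  have "card Ind = (\<Sum>x\<in>NA. card ((\<lambda>(a,c). nonnb a \<inter> nonnb c) x))"
    unfolding Ind_def by (rule card_SigmaI) (simp_all add: finite_NA fin_nonnb split: prod.split)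
  also have "\<dots> = (\<Sum>(a,c)\<in>NA. card (nonnb a \<inter> nonnb c))"
    by (rule sum.cong) (simp_all split: prod.split)
  finally show ?thesis .
qed

lemma main_identity:
  "2 * int (P3_count V E) = int n * (\<Sum>a\<in>V. int (r a)) + int (card Ind) - 2 * (\<Sum>a\<in>V. int (r a) * int (r a))"
proof -
  have "2 * int (P3_count V E) = int (card TT)" using card_TT2 by simp
  also have "\<dots> = (\<Sum>(a,c)\<in>NA. int (card (common a c)))" unfolding card_TT by (simp add: of_nat_sum split_def)
  also have "\<dots> = (\<Sum>(a,c)\<in>NA. int n + int (card (nonnb a \<inter> nonnb c)) - int (r a) - int (r c))"
  proof (rule sum.cong)
    fix x assume x: "x \<in> NA"
    obtain a c where xa: "x = (a,c)" by (cases x)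
    show "(case x of (a,c) \<Rightarrow> int (card (common a c))) =
          (case x of (a,c) \<Rightarrow> int n + int (card (nonnb a \<inter> nonnb c)) - int (r a) - int (r c))"
      using W_id[of a c] x unfolding xa by simp
  qed simp
  also have "\<dots> = (\<Sum>(a,c)\<in>NA. int n) + (\<Sum>(a,c)\<in>NA. int (card (nonnb a \<inter> nonnb c)))
                 - (\<Sum>(a,c)\<in>NA. int (r a)) - (\<Sum>(a,c)\<in>NA. int (r c))"
    by (simp add: sum.distrib sum_subtractf split_def)
  also have "(\<Sum>(a,c)\<in>NA. int (r c)) = (\<Sum>(a,c)\<in>NA. int (r a))" by (rule NA_swap)
  also have "(\<Sum>(a,c)\<in>NA. int (r a)) = (\<Sum>a\<in>V. int (r a) * int (r a))" by (rule sum_NA_fst)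
  also have "(\<Sum>(a,c)\<in>NA. int n) = (\<Sum>a\<in>V. int (r a) * int n)" by (rule sum_NA_fst)
  also have "(\<Sum>(a,c)\<in>NA. int (card (nonnb a \<inter> nonnb c))) = int (card Ind)"
    unfolding card_Ind by (simp add: of_nat_sum split_def)
  finally show ?thesis by (simp add: sum_distrib_left mult.commute sum_negf)
qed

end

context cig begin

definition opp where "opp x y z = (if d x y < d x z then d y z else d z y) + 1"

definition indep3 where "indep3 x y z \<longleftrightarrow> x \<in> V \<and> y \<in> V \<and> z \<in> V \<and> x \<noteq> y \<and> y \<noteq> z \<and> x \<noteq> z
   \<and> \<not> adj x y \<and> \<not> adj y z \<and> \<not> adj x z"

lemma adj_sym: "adj x y = adj y x" unfolding adj_def by blast

lemma indep3_sym: "indep3 x y z \<Longrightarrow> indep3 y x z" "indep3 x y z \<Longrightarrow> indep3 x z y"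
  unfolding indep3_def using adj_sym by metis+

lemma opp_sym: assumes "x \<in> V" "y \<in> V" "z \<in> V" "y \<noteq> z" shows "opp x y z = opp x z y"
proof -
  have "d x y \<noteq> d x z" using d_inj1[OF assms(1,2,3)] assms(4) by blast
  then show ?thesis unfolding opp_def by auto
qed

definition T3 where "T3 = {(x,y,z). indep3 x y z}"

lemma T3_sub: "T3 \<subseteq> V \<times> V \<times> V" unfolding T3_def indep3_def by auto
lemma fin_T3: "finite T3" using finite_subset[OF T3_sub] finV by auto

lemma card_Ind_T3: "card Ind = card T3"
proof -
  have "bij_betw (\<lambda>((a,c),x). (a,c,x)) Ind T3"
    by (rule bij_betw_byWitness[where f'="\<lambda>(a,c,x). ((a,c),x)"])
       (auto simp: Ind_def T3_def indep3_def NA_iff nonnb_def adj_sym)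
  then show ?thesis by (rule bij_betw_same_card)
qed

definition I1 where "I1 = {(x1,x2,x3). indep3 x1 x2 x3 \<and> opp x2 x3 x1 \<le> opp x1 x2 x3 \<and> opp x3 x1 x2 \<le> opp x1 x2 x3}"
definition I2 where "I2 = {(x1,x2,x3). indep3 x1 x2 x3 \<and> opp x1 x3 x2 + 1 \<le> opp x2 x1 x3 \<and> opp x3 x2 x1 \<le> opp x2 x1 x3}"
definition I3 where "I3 = {(x1,x2,x3). indep3 x1 x2 x3 \<and> opp x1 x2 x3 + 1 \<le> opp x3 x1 x2 \<and> opp x2 x3 x1 + 1 \<le> opp x3 x1 x2}"

lemma T3_cover: "T3 \<subseteq> I1 \<union> I2 \<union> I3"
proof
  fix t assume "t \<in> T3"
  then obtain x1 x2 x3 where t: "t = (x1,x2,x3)" and ind: "indep3 x1 x2 x3" unfolding T3_def by auto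
  have V: "x1 \<in> V" "x2 \<in> V" "x3 \<in> V" "x1 \<noteq> x2" "x2 \<noteq> x3" "x1 \<noteq> x3" using ind unfolding indep3_def by auto
  have s1: "opp x1 x3 x2 = opp x1 x2 x3" using opp_sym[OF V(1) V(2) V(3) V(5)] by simp
  have s2: "opp x2 x1 x3 = opp x2 x3 x1" using opp_sym[OF V(2) V(3) V(1)] V by simp
  have s3: "opp x3 x2 x1 = opp x3 x1 x2" using opp_sym[OF V(3) V(1) V(2) V(4)] by simp
  show "t \<in> I1 \<union> I2 \<union> I3"
    unfolding t I1_def I2_def I3_def using ind s1 s2 s3 by auto
qed

definition Qs where "Qs v e1 e2 = {(y,z). indep3 v y z \<and> opp y z v + e1 \<le> opp v y z \<and> opp z v y + e2 \<le> opp v y z}"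

lemma Qs_sub: "Qs v e1 e2 \<subseteq> V \<times> V" unfolding Qs_def indep3_def by auto
lemma fin_Qs: "finite (Qs v e1 e2)" using finite_subset[OF Qs_sub] finV by auto

lemma card_I_fiber:
  assumes "bij_betw f (Sigma V (\<lambda>v. Qs v e1 e2)) I"
  shows "card I = (\<Sum>v\<in>V. card (Qs v e1 e2))"
proof -
  have "card I = card (Sigma V (\<lambda>v. Qs v e1 e2))" using bij_betw_same_card[OF assms] by simp
  also have "\<dots> = (\<Sum>v\<in>V. card (Qs v e1 e2))" using finV fin_Qs by simp
  finally show ?thesis .
qed

lemma card_I1: "card I1 = (\<Sum>v\<in>V. card (Qs v 0 0))"
  by (rule card_I_fiber[where f="\<lambda>(v,(y,z)). (v,y,z)"],
      rule bij_betw_byWitness[where f'="\<lambda>(v,y,z). (v,(y,z))"])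
     (auto simp: I1_def Qs_def indep3_def)

lemma card_I2: "card I2 = (\<Sum>v\<in>V. card (Qs v 1 0))"
  by (rule card_I_fiber[where f="\<lambda>(v,(y,z)). (y,v,z)"],
      rule bij_betw_byWitness[where f'="\<lambda>(y,v,z). (v,(y,z))"])
     (auto simp: I2_def Qs_def indep3_def adj_sym)

lemma card_I3: "card I3 = (\<Sum>v\<in>V. card (Qs v 1 1))"
  by (rule card_I_fiber[where f="\<lambda>(v,(y,z)). (y,z,v)"],
      rule bij_betw_byWitness[where f'="\<lambda>(y,z,v). (v,(y,z))"])
     (auto simp: I3_def Qs_def indep3_def adj_sym)

end

context cig begin

definition L1 where "L1 v = int n - 2 * int (p v) - int (q v) - 3"
definition L2 where "L2 v = int n - int (p v) - 2 * int (q v) - 3"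

definition Qa where "Qa v e1 e2 = {(y,z) \<in> Qs v e1 e2. d v y < d v z}"

lemma Qa_facts:
  assumes yz: "(y,z) \<in> Qa v e1 e2"
  shows "q v + 1 \<le> d v y" "p v + 1 \<le> d z v"
    "2 * d z v + d v y + e1 \<le> n" "d z v + 2 * d v y + e2 \<le> n"
proof -
  have ind: "indep3 v y z" and c1: "opp y z v + e1 \<le> opp v y z" and c2: "opp z v y + e2 \<le> opp v y z"
    and lt: "d v y < d v z"
    using yz unfolding Qa_def Qs_def by auto
  have vV: "v \<in> V" and yV: "y \<in> V" and zV: "z \<in> V" and vy: "v \<noteq> y" and yz': "y \<noteq> z" and vz: "v \<noteq> z"
    and nvy: "\<not> adj v y" and nyz: "\<not> adj y z" and nvz: "\<not> adj v z"
    using ind unfolding indep3_def by auto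
  have "\<not> E v y" using nvy unfolding adj_def by blast
  then have "\<not> (0 < d v y \<and> d v y \<le> q v)" using out_char[OF vV yV] by blast
  moreover have "0 < d v y" using d_pos[OF vV yV vy] .
  ultimately show "q v + 1 \<le> d v y" by simp
  have "\<not> E z v" using nvz unfolding adj_def by blast
  then have "\<not> (0 < d z v \<and> d z v \<le> p v)" using in_char[OF vV zV] by blast
  moreover have "0 < d z v" using d_pos[OF zV vV] vz by blast
  ultimately show "p v + 1 \<le> d z v" by simp
  have t1: "d v y + d y z = d v z" using d_tri[OF vV yV zV vy yz' vz lt] .
  have s1: "d v z + d z v = n" using d_sum[OF vV zV vz] .
  have s2: "d v y + d y v = n" using d_sum[OF vV yV vy] .
  have s3: "d y z + d z y = n" using d_sum[OF yV zV yz'] .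
  have dvy: "0 < d v y" using d_pos[OF vV yV vy] .
  have o1: "opp v y z = d y z + 1" unfolding opp_def using lt by simp
  have "d y z < d y v" using t1 s2 d_lt[OF vV, of z] by simp
  then have o2: "opp y z v = d z v + 1" unfolding opp_def by simp
  have "d z v < d z y" using t1 s1 s3 dvy by simp
  then have o3: "opp z v y = d v y + 1" unfolding opp_def by simp
  show "2 * d z v + d v y + e1 \<le> n" using c1 o1 o2 t1 s1 by simp
  show "d z v + 2 * d v y + e2 \<le> n" using c2 o1 o3 t1 s1 by simp
qed

lemma Qa_bound:
  assumes vV: "v \<in> V"
  shows "card (Qa v e1 e2) \<le> K (L1 v - int e1) (L2 v - int e2)"
proof -
  let ?phi = "\<lambda>(y,z). (d z v - p v - 1, d v y - q v - 1)"
  have sub: "?phi ` Qa v e1 e2 \<subseteq> Kset (L1 v - int e1) (L2 v - int e2)"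
  proof
    fix x assume "x \<in> ?phi ` Qa v e1 e2"
    then obtain y z where yz: "(y,z) \<in> Qa v e1 e2" and x: "x = ?phi (y,z)" by auto
    note f = Qa_facts[OF yz]
    show "x \<in> Kset (L1 v - int e1) (L2 v - int e2)"
      unfolding x Kset_def L1_def L2_def using f by simp
  qed
  have inj: "inj_on ?phi (Qa v e1 e2)"
  proof (rule inj_onI)
    fix a b assume a: "a \<in> Qa v e1 e2" and b: "b \<in> Qa v e1 e2" and eq: "?phi a = ?phi b"
    obtain y z where ab: "a = (y,z)" by (cases a)
    obtain y' z' where bb: "b = (y',z')" by (cases b)
    note fa = Qa_facts[OF a[unfolded ab]] and fb = Qa_facts[OF b[unfolded bb]]
    have V: "y \<in> V" "z \<in> V" "y' \<in> V" "z' \<in> V"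
      using a b unfolding ab bb Qa_def Qs_def indep3_def by auto
    have "d v y = d v y'" "d z v = d z' v" using eq fa fb unfolding ab bb by auto
    then have "y = y'" "z = z'" using d_inj1[OF vV V(1) V(3)] d_inj2[OF vV V(2) V(4)] by auto
    then show "a = b" unfolding ab bb by simp
  qed
  have "card (Qa v e1 e2) = card (?phi ` Qa v e1 e2)" using card_image[OF inj] by simp
  also have "\<dots> \<le> K (L1 v - int e1) (L2 v - int e2)" unfolding K_def
    by (rule card_mono[OF Kset_finite sub])
  finally show ?thesis .
qed

lemma Qs_bound:
  assumes vV: "v \<in> V"
  shows "card (Qs v e1 e2) \<le> K (L1 v - int e1) (L2 v - int e2) + K (L1 v - int e2) (L2 v - int e1)"
proof -
  let ?Qb = "{(y,z) \<in> Qs v e1 e2. d v z < d v y}"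
  have eq: "Qs v e1 e2 = Qa v e1 e2 \<union> ?Qb"
  proof (intro set_eqI iffI)
    fix x assume x: "x \<in> Qs v e1 e2"
    obtain y z where xx: "x = (y,z)" by (cases x)
    have yzQ: "(y,z) \<in> Qs v e1 e2" using x xx by simp
    have ind: "indep3 v y z" using yzQ unfolding Qs_def by simp
    have "y \<in> V" "z \<in> V" "y \<noteq> z" using ind unfolding indep3_def by simp_all
    then have ne: "d v y \<noteq> d v z" using d_inj1[OF vV] by blast
    show "x \<in> Qa v e1 e2 \<union> ?Qb"
    proof (cases "d v y < d v z")
      case True then have "(y,z) \<in> Qa v e1 e2" unfolding Qa_def using yzQ by simp
      then show ?thesis using xx by simp
    next
      case False then have "d v z < d v y" using ne by simp
      then have "(y,z) \<in> ?Qb" using yzQ by simp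
      then show ?thesis using xx by simp
    qed
  next
    fix x assume "x \<in> Qa v e1 e2 \<union> ?Qb" then show "x \<in> Qs v e1 e2" unfolding Qa_def by blast
  qed
  have sub: "?Qb \<subseteq> (\<lambda>(y,z). (z,y)) ` Qa v e2 e1"
  proof
    fix x assume x: "x \<in> ?Qb"
    obtain y z where xx: "x = (y,z)" by (cases x)
    have ind: "indep3 v y z" and c1: "opp y z v + e1 \<le> opp v y z" and c2: "opp z v y + e2 \<le> opp v y z"
      and lt: "d v z < d v y" using x unfolding xx Qs_def by auto
    have V: "v \<in> V" "y \<in> V" "z \<in> V" "v \<noteq> y" "y \<noteq> z" "v \<noteq> z" using ind unfolding indep3_def by auto
    have ind': "indep3 v z y" using indep3_sym(2)[OF ind] .
    have e1: "opp v z y = opp v y z" using opp_sym[OF V(1) V(2) V(3) V(5)] by simp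
    have e2: "opp z y v = opp z v y" using opp_sym[OF V(3) V(2) V(1)] V by simp
    have e3: "opp y v z = opp y z v" using opp_sym[OF V(2) V(1) V(3)] V by simp
    have c1': "opp y v z + e1 \<le> opp v z y" using c1 e1 e3 by simp
    have c2': "opp z y v + e2 \<le> opp v z y" using c2 e1 e2 by simp
    have "(z,y) \<in> Qs v e2 e1" unfolding Qs_def using ind' c1' c2' by simp
    then have "(z,y) \<in> Qa v e2 e1" unfolding Qa_def using lt by simp
    then show "x \<in> (\<lambda>(y,z). (z,y)) ` Qa v e2 e1" unfolding xx by (rule rev_image_eqI) simp
  qed
  have "Qa v e2 e1 \<subseteq> Qs v e2 e1" unfolding Qa_def by blast
  then have fb: "finite (Qa v e2 e1)" using fin_Qs finite_subset by blast
  have h0: "card (Qa v e1 e2 \<union> ?Qb) \<le> card (Qa v e1 e2) + card ?Qb" by (rule card_Un_le)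
  have h1: "card (Qs v e1 e2) \<le> card (Qa v e1 e2) + card ?Qb" using h0 eq by metis
  have h2: "card ?Qb \<le> card ((\<lambda>(y,z). (z,y)) ` Qa v e2 e1)" by (rule card_mono[OF finite_imageI[OF fb] sub])
  have h3: "card ((\<lambda>(y,z). (z,y)) ` Qa v e2 e1) \<le> card (Qa v e2 e1)" by (rule card_image_le[OF fb])
  have h4: "card (Qa v e1 e2) \<le> K (L1 v - int e1) (L2 v - int e2)" by (rule Qa_bound[OF vV])
  have h5: "card (Qa v e2 e1) \<le> K (L1 v - int e2) (L2 v - int e1)" by (rule Qa_bound[OF vV])
  have "card (Qs v e1 e2) \<le> card (Qa v e1 e2) + card (Qa v e2 e1)" using h1 h2 h3 by linarith
  then show ?thesis using h4 h5 by linarith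
qed

end

context cig begin

lemma FF_nonneg: "0 \<le> FF a b" unfolding FF_def by simp

lemma vertex_bound:
  assumes vV: "v \<in> V"
  shows "8 * (int n * int (r v) - 2 * int (r v) * int (r v)) + 8 * FF (L1 v) (L2 v) \<le> (int n)^2"
proof -
  have pq: "int (p v) + int (q v) + int (r v) + 1 = int n" using pqr[OF vV] by linarith
  have sum3: "L1 v + L2 v + 3 = 3 * int (r v) - int n" unfolding L1_def L2_def using pq by simp
  have FFb: "4 * FF (L1 v) (L2 v) \<le> (3 * int (r v) - int n)^2" using FF_bound[of "L1 v" "L2 v"] sum3 by simp
  show ?thesis
  proof (cases "FF (L1 v) (L2 v) = 0")
    case True
    have "0 \<le> (int n - 4 * int (r v))^2" by simp
    then show ?thesis using True by (simp add: power2_eq_square algebra_simps)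
  next
    case False
    then have "\<not> (L1 v < 0 \<or> L2 v < 0)" using FF_zero by blast
    then have "0 \<le> L1 v + L2 v" by simp
    then have h1: "int n \<le> 3 * int (r v)" using sum3 by simp
    have h2: "int (r v) \<le> int n" using pq by simp
    have "(int n - int (r v)) * (3 * int (r v) - int n) \<ge> 0" using h1 h2 by simp
    then have e2: "4 * (int n * int (r v)) - int n * int n - 3 * (int (r v) * int (r v)) \<ge> 0"
      by (simp add: algebra_simps)
    have e1: "8 * FF (L1 v) (L2 v) \<le> 18 * (int (r v) * int (r v)) - 12 * (int n * int (r v)) + 2 * (int n * int n)"
      using FFb by (simp add: power2_eq_square algebra_simps)
    have e3: "0 \<le> int (r v) * int (r v)" by simp
    have e4: "8 * (int n * int (r v) - 2 * int (r v) * int (r v)) = 8 * (int n * int (r v)) - 16 * (int (r v) * int (r v))"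
      by (simp add: algebra_simps)
    have "8 * (int n * int (r v) - 2 * int (r v) * int (r v)) + 8 * FF (L1 v) (L2 v) \<le> int n * int n"
      unfolding e4 using e1 e2 e3 by linarith
    then show ?thesis by (simp add: power2_eq_square)
  qed
qed

lemma I_sub: "I1 \<subseteq> T3" "I2 \<subseteq> T3" "I3 \<subseteq> T3"
  unfolding I1_def I2_def I3_def T3_def by auto

lemma fin_I: "finite I1" "finite I2" "finite I3"
  using finite_subset[OF I_sub(1) fin_T3] finite_subset[OF I_sub(2) fin_T3] finite_subset[OF I_sub(3) fin_T3] by auto

lemma Ind_bound: "int (card Ind) \<le> (\<Sum>v\<in>V. FF (L1 v) (L2 v))"
proof -
  have "card Ind \<le> card (I1 \<union> I2 \<union> I3)" unfolding card_Ind_T3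
    using T3_cover fin_I by (intro card_mono) auto
  also have "\<dots> \<le> card I1 + card I2 + card I3"
    by (meson add_mono card_Un_le le_refl order_trans)
  also have "\<dots> = (\<Sum>v\<in>V. card (Qs v 0 0) + card (Qs v 1 0) + card (Qs v 1 1))"
    unfolding card_I1 card_I2 card_I3 by (simp add: sum.distrib)
  finally have "int (card Ind) \<le> int (\<Sum>v\<in>V. card (Qs v 0 0) + card (Qs v 1 0) + card (Qs v 1 1))"
    by (simp only: of_nat_le_iff)
  also have "\<dots> = (\<Sum>v\<in>V. int (card (Qs v 0 0)) + int (card (Qs v 1 0)) + int (card (Qs v 1 1)))"
    by (simp only: of_nat_sum of_nat_add)
  also have "\<dots> \<le> (\<Sum>v\<in>V. FF (L1 v) (L2 v))"
  proof (rule sum_mono)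
    fix v assume vV: "v \<in> V"
    have a: "card (Qs v 0 0) \<le> K (L1 v) (L2 v) + K (L1 v) (L2 v)" using Qs_bound[OF vV, of 0 0] by simp
    have b: "card (Qs v 1 0) \<le> K (L1 v - 1) (L2 v) + K (L1 v) (L2 v - 1)" using Qs_bound[OF vV, of 1 0] by simp
    have c: "card (Qs v 1 1) \<le> K (L1 v - 1) (L2 v - 1) + K (L1 v - 1) (L2 v - 1)" using Qs_bound[OF vV, of 1 1] by simp
    show "int (card (Qs v 0 0)) + int (card (Qs v 1 0)) + int (card (Qs v 1 1)) \<le> FF (L1 v) (L2 v)"
      unfolding FF_def using a b c by linarith
  qed
  finally show ?thesis .
qed

lemma main_bound: "16 * int (P3_count V E) \<le> (int n)^3"
proof -
  have "16 * int (P3_count V E) = 8 * (int n * (\<Sum>a\<in>V. int (r a)) + int (card Ind) - 2 * (\<Sum>a\<in>V. int (r a) * int (r a)))"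
    using main_identity by simp
  also have "\<dots> \<le> 8 * (int n * (\<Sum>a\<in>V. int (r a)) + (\<Sum>v\<in>V. FF (L1 v) (L2 v)) - 2 * (\<Sum>a\<in>V. int (r a) * int (r a)))"
    using Ind_bound by simp
  also have "\<dots> = (\<Sum>v\<in>V. 8 * (int n * int (r v) - 2 * int (r v) * int (r v)) + 8 * FF (L1 v) (L2 v))"
    by (simp add: sum.distrib sum_distrib_left sum_subtractf algebra_simps)
  also have "\<dots> \<le> (\<Sum>v\<in>V. (int n)^2)" by (rule sum_mono) (rule vertex_bound)
  also have "\<dots> = (int n)^3" by (simp add: power2_eq_square power3_eq_cube)
  finally show ?thesis .
qed

end

theorem theorem1:
  fixes V :: "'a set" and E :: "'a \<Rightarrow> 'a \<Rightarrow> bool"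
  assumes "circular_interval_digraph V E"
    and "two_free V E"
  shows "real (P3_count V E) \<le> real (card V) ^ 3 / 16"
proof -
  obtain pos where dg: "digraph V E" and bij: "bij_betw pos V {0..<card V}"
    and circ: "\<forall>u\<in>V. \<forall>v\<in>V. \<forall>w\<in>V. u \<noteq> v \<and> v \<noteq> w \<and> u \<noteq> w \<and>
            cyclic_order (pos u) (pos v) (pos w) \<and> E u w \<longrightarrow> E u v \<and> E v w"
    using assms(1) unfolding circular_interval_digraph_def by blast
  have finV: "finite V" and Ein: "\<And>u v. E u v \<Longrightarrow> u \<in> V \<and> v \<in> V \<and> u \<noteq> v"
    using dg unfolding digraph_def by auto
  have tf: "\<And>u v. E u v \<Longrightarrow> \<not> E v u"
    using assms(2) Ein unfolding two_free_def by blast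
  interpret cig V E pos
  proof
    fix u v w assume "u \<in> V" "v \<in> V" "w \<in> V" "u \<noteq> v" "v \<noteq> w" "u \<noteq> w"
      "cyclic_order (pos u) (pos v) (pos w)" "E u w"
    then show "E u v \<and> E v w" using circ by blast
  qed (use finV Ein bij tf in auto)
  have "16 * int (P3_count V E) \<le> (int (card V))^3" by (rule main_bound)
  then have "16 * real (P3_count V E) \<le> (real (card V))^3"
    by (metis (mono_tags, opaque_lifting) of_int_le_iff of_int_mult of_int_numeral of_int_of_nat_eq of_int_power)
  then show ?thesis by simp
qed

end
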